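(* Let $\mathcal T\in\Sigma^n$ be a text. The permutations $\pi,\bar\pi$ defined as $\pi(i)=\mathrm{ISA}[i]$ and $\bar\pi(i)=n-\mathrm{ISA}[i]+1$ for $i\in[n]$ are order-preserving for $\mathcal T$. Furthermore, $|\mathtt{st\text{-}lex}^-|\le r$ and $|\mathtt{st\text{-}lex}^+|\le r$.
   Context: A text is a string $\mathcal T\in\Sigma^n$ over an integer alphabet whose last symbol $\mathcal T[n]=\$$ occurs only there and is smallest. $\mathrm{ISA}[i]$ is the rank of the suffix $\mathcal T[i,n]$ among all suffixes of $\mathcal T$ in lexicographic order. A permutation $\pi:[n]\to[n]$ is order-preserving for $\mathcal T$ if for all $i,j\in[n-1]$, $\pi(i)<\pi(j)$ and $\mathcal T[i,i+1]=\mathcal T[j,j+1]$ imply $\pi(i+1)<\pi(j+1)$. For $i\ne j$, $\mathrm{rlce}(i,j)$ is the length of the longest common prefix of $\mathcal T[i,n]$ and $\mathcal T[j,n]$; $\mathrm{LPF}_\pi[i]=0$ if $\pi(i)=1$, else $\mathrm{LPF}_\pi[i]=\max_{\pi(j)<\pi(i)}\mathrm{rlce}(j,i)$; $\mathrm{PDA}_\pi$ is the set $\{i+\mathrm{LPF}_\pi[i]:i\in[n]\}$ sorted colexicographically by the prefixes $\mathcal T[1,j]$. $\mathtt{st\text{-}lex}^-=\mathrm{PDA}_\pi$ and $\mathtt{st\text{-}lex}^+=\mathrm{PDA}_{\bar\pi}$. $r$ is the number of maximal equal-letter runs in $\mathrm{BWT}(\mathcal T)$, obtained by sorting all rotations of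 $\mathcal T$ lexicographically and concatenating their last characters. *)

theory Defs
  imports Main "HOL-Library.List_Lexorder"
begin

text \<open>A text is a list T of naturals (integer alphabet), positions are 1-based:
  T[i] = T ! (i - 1), the suffix T[i,n] = drop (i - 1) T.
  Lists are compared lexicographically (List_Lexorder; a proper prefix is smaller).\<close>

definition is_text :: "nat list \<Rightarrow> bool" where
  "is_text T \<longleftrightarrow> T \<noteq> [] \<and> (\<forall>i < length T - 1. T ! i > last T)"

definition chr :: "nat list \<Rightarrow> nat \<Rightarrow> nat" where
  "chr T i = T ! (i - 1)"

definition suf :: "nat list \<Rightarrow> nat \<Rightarrow> nat list" where
  "suf T i = drop (i - 1) T"

definition ISA :: "nat list \<Rightarrow> nat \<Rightarrow> nat" where
  "ISA T i = card {j \<in> {1..length T}. suf T j < suf T i} + 1"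

definition order_preserving :: "nat list \<Rightarrow> (nat \<Rightarrow> nat) \<Rightarrow> bool" where
  "order_preserving T \<pi> \<longleftrightarrow> bij_betw \<pi> {1..length T} {1..length T} \<and>
     (\<forall>i \<in> {1..length T - 1}. \<forall>j \<in> {1..length T - 1}.
        \<pi> i < \<pi> j \<and> chr T i = chr T j \<and> chr T (i+1) = chr T (j+1) \<longrightarrow> \<pi> (i+1) < \<pi> (j+1))"

fun lcp :: "'a list \<Rightarrow> 'a list \<Rightarrow> nat" where
  "lcp (x#xs) (y#ys) = (if x = y then Suc (lcp xs ys) else 0)"
| "lcp _ _ = 0"

definition rlce :: "nat list \<Rightarrow> nat \<Rightarrow> nat \<Rightarrow> nat" where
  "rlce T i j = lcp (suf T i) (suf T j)"

definition LPF :: "nat list \<Rightarrow> (nat \<Rightarrow> nat) \<Rightarrow> nat \<Rightarrow> nat" where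
  "LPF T \<pi> i = (if \<pi> i = 1 then 0
     else Max {rlce T j i | j. j \<in> {1..length T} \<and> \<pi> j < \<pi> i})"

text \<open>The set underlying PDA; its colexicographic sorting does not affect its size.\<close>
definition PDA :: "nat list \<Rightarrow> (nat \<Rightarrow> nat) \<Rightarrow> nat set" where
  "PDA T \<pi> = {i + LPF T \<pi> i | i. i \<in> {1..length T}}"

definition BWT :: "nat list \<Rightarrow> nat list" where
  "BWT T = map last (sorted_list_of_set {rotate k T | k. k < length T})"

definition runs :: "'a list \<Rightarrow> nat" where
  "runs L = (if L = [] then 0 else Suc (card {k. Suc k < length L \<and> L ! k \<noteq> L ! Suc k}))"

end

theory Submission
  imports Defs
begin

lemma lcp_between:
  fixes a b c :: "nat list"
  shows "a \<le> b \<Longrightarrow> b \<le> c \<Longrightarrow> lcp a c \<le> lcp b c \<and> lcp a c \<le> lcp a b"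
proof (induction a arbitrary: b c)
  case Nil then show ?case by (cases c) auto
next
  case (Cons x a)
  show ?case
  proof (cases b)
    case Nil then show ?thesis using Cons.prems by auto
  next
    case (Cons y b')
    show ?thesis
    proof (cases c)
      case Nil then show ?thesis by auto
    next
      case (Cons z c')
      show ?thesis
      proof (cases "x = z")
        case False then show ?thesis using \<open>c = z # c'\<close> by simp
      next
        case True
        then have "y = x" "a \<le> b'" "b' \<le> c'"
          using Cons.prems \<open>b = y # b'\<close> \<open>c = z # c'\<close> by auto
        then show ?thesis using Cons.IH[of b' c'] \<open>b = y # b'\<close> \<open>c = z # c'\<close> True by auto
      qed
    qed
  qed
qed

lemma lcp_sym: "lcp a b = lcp b a"
  by (induction a b rule: lcp.induct) auto

lemma sorted_card_less:
  fixes xs :: "'a::linorder list"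
  assumes "sorted_wrt (<) xs" "k < length xs"
  shows "card {y \<in> set xs. y < xs ! k} = k"
proof -
  have "{y \<in> set xs. y < xs ! k} = set (take k xs)"
  proof
    show "{y \<in> set xs. y < xs ! k} \<subseteq> set (take k xs)"
    proof
      fix y assume "y \<in> {y \<in> set xs. y < xs ! k}"
      then obtain m where m: "m < length xs" "xs ! m = y" "y < xs ! k" by (auto simp: in_set_conv_nth)
      have "m < k"
      proof (rule ccontr)
        assume "\<not> m < k"
        then have "k = m \<or> k < m" by auto
        then have "xs ! k \<le> xs ! m" using assms m by (auto simp: sorted_wrt_iff_nth_less less_imp_le)
        then show False using m by auto
      qed
      then show "y \<in> set (take k xs)" using m by (auto simp: in_set_conv_nth)
    qed
  next
    show "set (take k xs) \<subseteq> {y \<in> set xs. y < xs ! k}"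
    proof
      fix y assume "y \<in> set (take k xs)"
      then obtain m where "m < k" "xs ! m = y" using assms(2) by (auto simp: in_set_conv_nth)
      moreover have "m < length xs" using \<open>m < k\<close> assms(2) by simp
      ultimately show "y \<in> {y \<in> set xs. y < xs ! k}" using assms by (auto simp: sorted_wrt_iff_nth_less)
    qed
  qed
  moreover have "distinct (take k xs)" using assms(1) strict_sorted_iff distinct_take by blast
  ultimately show ?thesis using assms(2) by (simp add: distinct_card)
qed

context
  fixes T :: "nat list"
  assumes hT: "is_text T"
begin

lemma T_ne: "T \<noteq> []" and T_gt: "m < length T - 1 \<Longrightarrow> T ! m > last T"
  using hT by (auto simp: is_text_def)

lemma last_T: "last T = T ! (length T - 1)"
  using T_ne by (simp add: last_conv_nth)

lemma chr_ne_last: "2 \<le> i \<Longrightarrow> i \<le> length T \<Longrightarrow> chr T (i - 1) \<noteq> last T"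
proof -
  assume "2 \<le> i" "i \<le> length T"
  then have "i - 2 < length T - 1" "i - 1 - 1 = i - 2" by arith+
  then show ?thesis using T_gt[of "i - 2"] by (auto simp: chr_def)
qed

lemma suf_cons: "1 \<le> i \<Longrightarrow> i < length T \<Longrightarrow> suf T i = chr T i # suf T (i + 1)"
  unfolding suf_def chr_def using Cons_nth_drop_Suc[of "i - 1" T] by simp

lemma length_suf: "length (suf T i) = length T - (i - 1)"
  by (simp add: suf_def)

lemma suf_inj: "i \<in> {1..length T} \<Longrightarrow> j \<in> {1..length T} \<Longrightarrow> suf T i = suf T j \<Longrightarrow> i = j"
  using length_suf[of i] length_suf[of j] by auto

lemma suf_last: "i \<in> {1..length T} \<Longrightarrow> suf T i \<noteq> [] \<and> last (suf T i) = last T"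
  unfolding suf_def by (auto simp: last_drop)

lemma no_prefix:
  assumes "i \<in> {1..length T}" "j \<in> {1..length T}"
  shows "\<not> (\<exists>a v. suf T j = suf T i @ a # v)"
proof
  assume "\<exists>a v. suf T j = suf T i @ a # v"
  then obtain a v where e: "suf T j = suf T i @ a # v" by blast
  define l where "l = length (suf T i)"
  have l1: "l \<ge> 1" using suf_last[OF assms(1)] unfolding l_def by (cases "suf T i") auto
  have "suf T i ! (l - 1) = last T" using suf_last[OF assms(1)] by (metis l_def last_conv_nth)
  then have "suf T j ! (l - 1) = last T" proof -
    have "l - 1 < l" using l1 by arith
    then show ?thesis using e \<open>suf T i ! (l - 1) = last T\<close> nth_append[of "suf T i" "a # v" "l - 1"] unfolding l_def by simp
  qed
  moreover have "length (suf T j) = l + 1 + length v" using e by (simp add: l_def)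
  ultimately have "T ! (j - 1 + (l - 1)) = last T" and "j - 1 + (l - 1) < length T - 1"
    using l1 assms(2) by (auto simp: suf_def)
  then show False using T_gt by fastforce
qed

lemma rot_eq: "i \<in> {1..length T} \<Longrightarrow> rotate (i - 1) T = suf T i @ take (i - 1) T"
proof -
  assume "i \<in> {1..length T}"
  then have "(i - 1) mod length T = i - 1" by (intro mod_less) auto
  then show ?thesis by (simp add: rotate_drop_take suf_def)
qed

lemma rot_less:
  assumes "i \<in> {1..length T}" "j \<in> {1..length T}" "suf T i < suf T j"
  shows "rotate (i - 1) T < rotate (j - 1) T"
proof -
  have "(suf T i, suf T j) \<in> lexord {(u, v). u < v}" using assms(3) by (simp add: list_less_def)
  then obtain u a b v w where "a < b" "suf T i = u @ a # v" "suf T j = u @ b # w"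
    using no_prefix[OF assms(1,2)] unfolding lexord_def by blast
  then show ?thesis using rot_eq[OF assms(1)] rot_eq[OF assms(2)]
    by (simp add: list_less_def lexord_append_left_rightI)
qed

lemma rot_less_iff:
  assumes "i \<in> {1..length T}" "j \<in> {1..length T}"
  shows "rotate (i - 1) T < rotate (j - 1) T \<longleftrightarrow> suf T i < suf T j"
proof
  assume a: "rotate (i - 1) T < rotate (j - 1) T"
  show "suf T i < suf T j"
  proof (rule ccontr)
    assume "\<not> suf T i < suf T j"
    then have "suf T j < suf T i \<or> suf T j = suf T i" by auto
    then show False
    proof
      assume "suf T j < suf T i"
      then show False using rot_less[OF assms(2,1)] a by auto
    next
      assume "suf T j = suf T i"
      then show False using suf_inj[OF assms] a by auto
    qed
  qed
qed (rule rot_less[OF assms])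

lemma ISA_less_iff:
  assumes "i \<in> {1..length T}" "j \<in> {1..length T}"
  shows "ISA T i < ISA T j \<longleftrightarrow> suf T i < suf T j"
proof
  assume a: "suf T i < suf T j"
  have "{k \<in> {1..length T}. suf T k < suf T i} \<subset> {k \<in> {1..length T}. suf T k < suf T j}"
    using a assms by auto
  then show "ISA T i < ISA T j" unfolding ISA_def by (simp add: psubset_card_mono)
next
  assume a: "ISA T i < ISA T j"
  show "suf T i < suf T j"
  proof (rule ccontr)
    assume "\<not> suf T i < suf T j"
    then have "suf T j < suf T i \<or> suf T j = suf T i" by auto
    then show False
    proof
      assume b: "suf T j < suf T i"
      have "{k \<in> {1..length T}. suf T k < suf T j} \<subset> {k \<in> {1..length T}. suf T k < suf T i}"
        using b assms by auto
      then have "ISA T j < ISA T i" unfolding ISA_def by (simp add: psubset_card_mono)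
      then show False using a by simp
    next
      assume "suf T j = suf T i"
      then show False using suf_inj[OF assms] a by auto
    qed
  qed
qed

lemma ISA_range: "i \<in> {1..length T} \<Longrightarrow> ISA T i \<in> {1..length T}"
proof -
  assume i: "i \<in> {1..length T}"
  have "{k \<in> {1..length T}. suf T k < suf T i} \<subseteq> {1..length T} - {i}" by auto
  then have "card {k \<in> {1..length T}. suf T k < suf T i} \<le> card ({1..length T} - {i})"
    by (intro card_mono) auto
  also have "\<dots> = length T - 1" using i by simp
  finally show ?thesis using i unfolding ISA_def by auto
qed

lemma ISA_inj: "inj_on (ISA T) {1..length T}"
proof (rule inj_onI)
  fix i j assume ij: "i \<in> {1..length T}" "j \<in> {1..length T}" "ISA T i = ISA T j"
  show "i = j"
  proof (rule ccontr)
    assume "i \<noteq> j"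
    then have "suf T i \<noteq> suf T j" using suf_inj ij by blast
    then have "suf T i < suf T j \<or> suf T j < suf T i" by auto
    then show False using ISA_less_iff[OF ij(1,2)] ISA_less_iff[OF ij(2,1)] ij(3) by auto
  qed
qed

lemma ISA_bij: "bij_betw (ISA T) {1..length T} {1..length T}"
proof -
  have "ISA T ` {1..length T} \<subseteq> {1..length T}" using ISA_range by auto
  then show ?thesis unfolding bij_betw_def using ISA_inj endo_inj_surj[of "{1..length T}" "ISA T"] by auto
qed

lemma ISA_surj: "k \<in> {1..length T} \<Longrightarrow> \<exists>j \<in> {1..length T}. ISA T j = k"
  using ISA_bij by (metis bij_betw_def imageE)

lemma Rot_eq: "{rotate k T | k. k < length T} = (\<lambda>i. rotate (i - 1) T) ` {1..length T}"
proof (rule set_eqI)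
  fix x
  show "x \<in> {rotate k T | k. k < length T} \<longleftrightarrow> x \<in> (\<lambda>i. rotate (i - 1) T) ` {1..length T}"
  proof
    assume "x \<in> {rotate k T | k. k < length T}"
    then obtain k where "k < length T" "x = rotate k T" by auto
    then show "x \<in> (\<lambda>i. rotate (i - 1) T) ` {1..length T}"
      by (intro image_eqI[of _ _ "k + 1"]) auto
  next
    assume "x \<in> (\<lambda>i. rotate (i - 1) T) ` {1..length T}"
    then obtain i where "i \<in> {1..length T}" "x = rotate (i - 1) T" by auto
    then show "x \<in> {rotate k T | k. k < length T}" by (intro CollectI exI[of _ "i - 1"]) auto
  qed
qed

lemma rot_inj: "inj_on (\<lambda>i. rotate (i - 1) T) {1..length T}"
proof (rule inj_onI)
  fix i j assume ij: "i \<in> {1..length T}" "j \<in> {1..length T}" "rotate (i - 1) T = rotate (j - 1) T"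
  then have "\<not> suf T i < suf T j" "\<not> suf T j < suf T i"
    using rot_less_iff[OF ij(1,2)] rot_less_iff[OF ij(2,1)] by auto
  then have "suf T i = suf T j" by auto
  then show "i = j" using suf_inj ij by blast
qed

lemma last_rot: "i \<in> {1..length T} \<Longrightarrow> last (rotate (i - 1) T) = (if i = 1 then last T else chr T (i - 1))"
proof -
  assume i: "i \<in> {1..length T}"
  show ?thesis
  proof (cases "i = 1")
    case True
    then show ?thesis using rot_eq[OF i] by simp
  next
    case False
    then have "take (i - 1) T \<noteq> []" using i T_ne by auto
    then have "last (rotate (i - 1) T) = last (take (i - 1) T)" using rot_eq[OF i] by simp
    also have "\<dots> = T ! (i - 1 - 1)"
    proof -
      have "length (take (i - 1) T) = i - 1" using i by (auto simp: min_def)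
      moreover have "i - 1 - 1 < i - 1" using False i by auto
      ultimately show ?thesis using \<open>take (i - 1) T \<noteq> []\<close> by (simp add: last_conv_nth)
    qed
    finally show ?thesis using False by (simp add: chr_def)
  qed
qed

lemma BWT_len: "length (BWT T) = length T"
proof -
  have "card {rotate k T | k. k < length T} = length T"
    using Rot_eq rot_inj by (simp add: card_image)
  then show ?thesis by (simp add: BWT_def)
qed

lemma BWT_nth:
  assumes i: "i \<in> {1..length T}"
  shows "BWT T ! (ISA T i - 1) = (if i = 1 then last T else chr T (i - 1))"
proof -
  define Rot where "Rot = {rotate k T | k. k < length T}"
  define xs where "xs = sorted_list_of_set Rot"
  have fin: "finite Rot" unfolding Rot_def using Rot_eq by simp
  have sx: "sorted_wrt (<) xs" "set xs = Rot" unfolding xs_def using fin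
    by (auto simp: strict_sorted_list_of_set)
  have "rotate (i - 1) T \<in> Rot" unfolding Rot_def using Rot_eq i by auto
  then obtain idx where idx: "idx < length xs" "xs ! idx = rotate (i - 1) T"
    using sx by (auto simp: in_set_conv_nth)
  have c1: "card {y \<in> set xs. y < xs ! idx} = idx" using sorted_card_less[OF sx(1) idx(1)] .
  have "{y \<in> Rot. y < rotate (i - 1) T} = (\<lambda>j. rotate (j - 1) T) ` {j \<in> {1..length T}. suf T j < suf T i}"
    unfolding Rot_def Rot_eq using rot_less_iff i by auto
  moreover have "inj_on (\<lambda>j. rotate (j - 1) T) {j \<in> {1..length T}. suf T j < suf T i}"
    using rot_inj by (rule inj_on_subset) auto
  ultimately have "card {y \<in> Rot. y < rotate (i - 1) T} = ISA T i - 1"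
    unfolding ISA_def by (simp add: card_image)
  then have "idx = ISA T i - 1" using c1 idx sx by simp
  then have "BWT T ! (ISA T i - 1) = last (xs ! idx)"
    using idx unfolding BWT_def xs_def Rot_def by simp
  then show ?thesis using idx last_rot[OF i] by simp
qed

lemma rlce_cons:
  assumes "1 \<le> i" "i < length T" "1 \<le> j" "j < length T" "chr T i = chr T j"
  shows "rlce T i j = Suc (rlce T (i + 1) (j + 1))"
  using suf_cons[of i] suf_cons[of j] assms by (simp add: rlce_def)

lemma runs_eq: "runs (BWT T) = Suc (card {k. Suc k < length T \<and> BWT T ! k \<noteq> BWT T ! Suc k})"
  using BWT_len T_ne unfolding runs_def by auto

lemma runs_bound1:
  "card {i \<in> {1..length T}. i = 1 \<or>
      \<not> (\<exists>j \<in> {2..length T}. ISA T j + 1 = ISA T i \<and> chr T (j - 1) = chr T (i - 1))} \<le> runs (BWT T)"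
  (is "card ?H \<le> _")
proof -
  define D where "D = {k. Suc k < length T \<and> BWT T ! k \<noteq> BWT T ! Suc k}"
  have fD: "finite D" unfolding D_def by (rule finite_subset[of _ "{..<length T}"]) auto
  define B where "B = insert 0 (Suc ` D)"
  have cB: "card B \<le> Suc (card D)" unfolding B_def
    using card_insert_le_m1[of "Suc (card D)" "Suc ` D"] card_image_le[OF fD, of Suc]
    by (simp add: card_insert_if fD)
  have fB: "finite B" unfolding B_def using fD by simp
  have inj: "inj_on (\<lambda>i. ISA T i - 1) ?H"
  proof (rule inj_onI)
    fix i j assume "i \<in> ?H" "j \<in> ?H" "ISA T i - 1 = ISA T j - 1"
    then have "i \<in> {1..length T}" "j \<in> {1..length T}" "ISA T i - 1 = ISA T j - 1" by auto
    moreover then have "ISA T i \<ge> 1" "ISA T j \<ge> 1" using ISA_range by auto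
    ultimately show "i = j" using ISA_inj by (auto simp: inj_on_def)
  qed
  have sub: "(\<lambda>i. ISA T i - 1) ` ?H \<subseteq> B"
  proof
    fix x assume "x \<in> (\<lambda>i. ISA T i - 1) ` ?H"
    then obtain i where iH: "i \<in> ?H" and x: "x = ISA T i - 1" by (rule imageE)
    have i: "i \<in> {1..length T}" using iH by simp
    have ri: "ISA T i \<in> {1..length T}" using ISA_range[OF i] .
    show "x \<in> B"
    proof (cases "ISA T i = 1")
      case True then show ?thesis using x by (simp add: B_def)
    next
      case False
      have "ISA T i - 1 \<in> {1..length T}" using ri False by auto
      then obtain j where j: "j \<in> {1..length T}" "ISA T j = ISA T i - 1"
        using ISA_surj[of "ISA T i - 1"] by blast
      have rj: "ISA T j \<ge> 1" using ISA_range[OF j(1)] by simp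
      have "BWT T ! (ISA T i - 2) \<noteq> BWT T ! (ISA T i - 1)"
      proof
        assume eq: "BWT T ! (ISA T i - 2) = BWT T ! (ISA T i - 1)"
        have "ISA T j - 1 = ISA T i - 2" using j(2) by simp
        then have e2: "(if j = 1 then last T else chr T (j - 1)) = (if i = 1 then last T else chr T (i - 1))"
          using BWT_nth[OF j(1)] BWT_nth[OF i] eq by simp
        have "j \<noteq> i" using j(2) False ri by auto
        show False
        proof (cases "i = 1")
          case True
          then have "j \<noteq> 1" using \<open>j \<noteq> i\<close> by simp
          then show False using e2 True chr_ne_last[of j] j(1) by auto
        next
          case False
          then have ne: "chr T (i - 1) \<noteq> last T" using chr_ne_last[of i] i by auto
          then have "j \<noteq> 1" using e2 False by auto
          then have "j \<in> {2..length T}" using j(1) by auto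
          moreover have "ISA T j + 1 = ISA T i" using j(2) rj by simp
          moreover have "chr T (j - 1) = chr T (i - 1)" using e2 False \<open>j \<noteq> 1\<close> by simp
          ultimately show False using iH False by blast
        qed
      qed
      moreover have "Suc (ISA T i - 2) < length T" using ri False by auto
      moreover have "Suc (ISA T i - 2) = ISA T i - 1" using ri False by auto
      ultimately have "ISA T i - 2 \<in> D" unfolding D_def by simp
      then have "Suc (ISA T i - 2) \<in> B" unfolding B_def by simp
      then show ?thesis using x \<open>Suc (ISA T i - 2) = ISA T i - 1\<close> by simp
    qed
  qed
  have "card ?H = card ((\<lambda>i. ISA T i - 1) ` ?H)" using inj by (simp add: card_image)
  also have "\<dots> \<le> card B" using fB sub by (rule card_mono)
  finally show ?thesis using cB runs_eq D_def by simp
qed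

lemma runs_bound2:
  "card {i \<in> {1..length T}. i = 1 \<or>
      \<not> (\<exists>j \<in> {2..length T}. (length T - ISA T j + 1) + 1 = length T - ISA T i + 1
          \<and> chr T (j - 1) = chr T (i - 1))} \<le> runs (BWT T)"
  (is "card ?H \<le> _")
proof -
  define D where "D = {k. Suc k < length T \<and> BWT T ! k \<noteq> BWT T ! Suc k}"
  have fD: "finite D" unfolding D_def by (rule finite_subset[of _ "{..<length T}"]) auto
  define B where "B = insert (length T - 1) D"
  have cB: "card B \<le> Suc (card D)" unfolding B_def
    by (simp add: card_insert_if fD)
  have fB: "finite B" unfolding B_def using fD by simp
  have inj: "inj_on (\<lambda>i. ISA T i - 1) ?H"
  proof (rule inj_onI)
    fix i j assume "i \<in> ?H" "j \<in> ?H" "ISA T i - 1 = ISA T j - 1"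
    then have "i \<in> {1..length T}" "j \<in> {1..length T}" "ISA T i - 1 = ISA T j - 1" by auto
    moreover then have "ISA T i \<ge> 1" "ISA T j \<ge> 1" using ISA_range by auto
    ultimately show "i = j" using ISA_inj by (auto simp: inj_on_def)
  qed
  have sub: "(\<lambda>i. ISA T i - 1) ` ?H \<subseteq> B"
  proof
    fix x assume "x \<in> (\<lambda>i. ISA T i - 1) ` ?H"
    then obtain i where iH: "i \<in> ?H" and x: "x = ISA T i - 1" by (rule imageE)
    have i: "i \<in> {1..length T}" using iH by simp
    have ri: "ISA T i \<in> {1..length T}" using ISA_range[OF i] .
    show "x \<in> B"
    proof (cases "ISA T i = length T")
      case True then show ?thesis using x by (simp add: B_def)
    next
      case False
      have "ISA T i + 1 \<in> {1..length T}" using ri False by auto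
      then obtain j where j: "j \<in> {1..length T}" "ISA T j = ISA T i + 1"
        using ISA_surj[of "ISA T i + 1"] by blast
      have rj: "ISA T j \<le> length T" using ISA_range[OF j(1)] by simp
      have "BWT T ! (ISA T i - 1) \<noteq> BWT T ! (ISA T i)"
      proof
        assume eq: "BWT T ! (ISA T i - 1) = BWT T ! (ISA T i)"
        have "ISA T j - 1 = ISA T i" using j(2) by simp
        then have e2: "(if j = 1 then last T else chr T (j - 1)) = (if i = 1 then last T else chr T (i - 1))"
          using BWT_nth[OF j(1)] BWT_nth[OF i] eq by simp
        have "j \<noteq> i" using j(2) by auto
        show False
        proof (cases "i = 1")
          case True
          then have "j \<noteq> 1" using \<open>j \<noteq> i\<close> by simp
          then show False using e2 True chr_ne_last[of j] j(1) by auto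
        next
          case False
          then have ne: "chr T (i - 1) \<noteq> last T" using chr_ne_last[of i] i by auto
          then have "j \<noteq> 1" using e2 False by auto
          then have "j \<in> {2..length T}" using j(1) by auto
          moreover have "(length T - ISA T j + 1) + 1 = length T - ISA T i + 1" using j(2) rj by simp
          moreover have "chr T (j - 1) = chr T (i - 1)" using e2 False \<open>j \<noteq> 1\<close> by simp
          ultimately show False using iH False by blast
        qed
      qed
      moreover have "Suc (ISA T i - 1) < length T" using ri False by auto
      moreover have "Suc (ISA T i - 1) = ISA T i" using ri by auto
      ultimately have "ISA T i - 1 \<in> D" unfolding D_def by simp
      then show ?thesis using x unfolding B_def by simp
    qed
  qed
  have "card ?H = card ((\<lambda>i. ISA T i - 1) ` ?H)" using inj by (simp add: card_image)
  also have "\<dots> \<le> card B" using fB sub by (rule card_mono)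
  finally show ?thesis using cB runs_eq D_def by simp
qed

context
  fixes \<rho> :: "nat \<Rightarrow> nat" and R :: "nat list \<Rightarrow> nat list \<Rightarrow> bool"
  assumes bij: "bij_betw \<rho> {1..length T} {1..length T}"
    and ordR: "\<And>i j. i \<in> {1..length T} \<Longrightarrow> j \<in> {1..length T} \<Longrightarrow> \<rho> j < \<rho> i \<longleftrightarrow> R (suf T j) (suf T i)"
    and consR: "\<And>x a b. R (x # a) (x # b) \<longleftrightarrow> R a b"
    and betw: "\<And>a b c. R a b \<Longrightarrow> R b c \<Longrightarrow> lcp a c \<le> lcp b c"
begin

lemma rho_range: "i \<in> {1..length T} \<Longrightarrow> \<rho> i \<in> {1..length T}"
  using bij by (auto simp: bij_betw_def)

lemma rho_op: "order_preserving T \<rho>"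
  unfolding order_preserving_def
proof (intro conjI bij ballI impI)
  fix i j assume ij: "i \<in> {1..length T - 1}" "j \<in> {1..length T - 1}"
    and h: "\<rho> i < \<rho> j \<and> chr T i = chr T j \<and> chr T (i + 1) = chr T (j + 1)"
  have "R (suf T i) (suf T j)" using h ij ordR[of j i] by auto
  then have "R (suf T (i + 1)) (suf T (j + 1))"
    using suf_cons[of i] suf_cons[of j] ij h consR by auto
  then show "\<rho> (i + 1) < \<rho> (j + 1)" using ordR[of "j + 1" "i + 1"] ij by auto
qed

lemma LPF_set: "{rlce T j i | j. j \<in> {1..length T} \<and> \<rho> j < \<rho> i} = (\<lambda>j. rlce T j i) ` {j \<in> {1..length T}. \<rho> j < \<rho> i}"
  by auto

lemma LPF_ge:
  assumes "i \<in> {1..length T}" "j \<in> {1..length T}" "\<rho> j < \<rho> i"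
  shows "rlce T j i \<le> LPF T \<rho> i"
proof -
  have "\<rho> i \<noteq> 1" using rho_range[OF assms(2)] assms(3) by auto
  then show ?thesis unfolding LPF_def LPF_set using assms by (auto intro!: Max_ge)
qed

lemma LPF_cases:
  assumes "i \<in> {1..length T}" "\<rho> i \<noteq> 1"
  shows "\<exists>p \<in> {1..length T}. \<rho> p < \<rho> i \<and> LPF T \<rho> i = rlce T p i"
proof -
  have "1 \<in> {1..length T}" using T_ne by (cases T) auto
  then obtain q where q: "q \<in> {1..length T}" "\<rho> q = 1" using bij by (metis bij_betw_def imageE)
  then have q2: "\<rho> q < \<rho> i" using assms rho_range[OF assms(1)] by auto
  let ?S = "(\<lambda>j. rlce T j i) ` {j \<in> {1..length T}. \<rho> j < \<rho> i}"
  have "?S \<noteq> {}" using q q2 by auto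
  then have "Max ?S \<in> ?S" by (intro Max_in) auto
  then show ?thesis unfolding LPF_def LPF_set using assms by auto
qed

lemma lemA:
  assumes i: "2 \<le> i" "i \<le> length T"
  shows "LPF T \<rho> (i - 1) \<le> LPF T \<rho> i + 1"
proof (cases "\<rho> (i - 1) = 1")
  case True then show ?thesis by (simp add: LPF_def)
next
  case False
  have i1: "i - 1 \<in> {1..length T}" "i \<in> {1..length T}" using i by auto
  obtain p where p: "p \<in> {1..length T}" "\<rho> p < \<rho> (i - 1)" "LPF T \<rho> (i - 1) = rlce T p (i - 1)"
    using LPF_cases[OF i1(1) False] by blast
  show ?thesis
  proof (cases "rlce T p (i - 1) = 0")
    case True then show ?thesis using p by simp
  next
    case False
    have si: "suf T (i - 1) = chr T (i - 1) # suf T i" using suf_cons[of "i - 1"] i by auto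
    have "p < length T"
    proof (rule ccontr)
      assume "\<not> p < length T"
      then have "p = length T" using p by auto
      moreover have "drop (length T - 1) T = T ! (length T - 1) # drop (length T) T"
        using Cons_nth_drop_Suc[of "length T - 1" T] T_ne by simp
      ultimately have "suf T p = [last T]" using last_T by (simp add: suf_def)
      then have "chr T (i - 1) = last T" using False si by (simp add: rlce_def split: if_splits)
      then show False using chr_ne_last i by blast
    qed
    then have sp: "suf T p = chr T p # suf T (p + 1)" using suf_cons p by auto
    have ceq: "chr T p = chr T (i - 1)" using False sp si by (simp add: rlce_def split: if_splits)
    have r: "rlce T p (i - 1) = Suc (rlce T (p + 1) i)"
      using rlce_cons[of p "i - 1"] p i \<open>p < length T\<close> ceq by auto
    have "R (suf T p) (suf T (i - 1))" using ordR p i1 by auto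
    then have "R (suf T (p + 1)) (suf T i)" using sp si ceq consR by auto
    then have "\<rho> (p + 1) < \<rho> i" using ordR[of i "p + 1"] i1 \<open>p < length T\<close> by auto
    then have "rlce T (p + 1) i \<le> LPF T \<rho> i" using LPF_ge[of i "p + 1"] i1 \<open>p < length T\<close> by auto
    then show ?thesis using p r by simp
  qed
qed

lemma lemB:
  assumes i: "2 \<le> i" "i \<le> length T" and j: "2 \<le> j" "j \<le> length T"
    and adj: "\<rho> j + 1 = \<rho> i" and ceq: "chr T (j - 1) = chr T (i - 1)"
  shows "LPF T \<rho> (i - 1) = LPF T \<rho> i + 1"
proof -
  have i1: "i - 1 \<in> {1..length T}" "i \<in> {1..length T}" using i by auto
  have j1: "j - 1 \<in> {1..length T}" "j \<in> {1..length T}" using j by auto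
  have si: "suf T (i - 1) = chr T (i - 1) # suf T i" using suf_cons[of "i - 1"] i by auto
  have sj: "suf T (j - 1) = chr T (j - 1) # suf T j" using suf_cons[of "j - 1"] j by auto
  have Rji: "R (suf T j) (suf T i)" using ordR[OF i1(2) j1(2)] adj by simp
  then have "R (suf T (j - 1)) (suf T (i - 1))" using si sj ceq consR by auto
  then have "\<rho> (j - 1) < \<rho> (i - 1)" using ordR i1 j1 by auto
  then have g1: "rlce T (j - 1) (i - 1) \<le> LPF T \<rho> (i - 1)" using LPF_ge i1 j1 by auto
  have r: "rlce T (j - 1) (i - 1) = Suc (rlce T j i)"
    using rlce_cons[of "j - 1" "i - 1"] i j ceq by auto
  have "\<rho> i \<noteq> 1" using adj rho_range[OF j1(2)] by auto
  then obtain p where p: "p \<in> {1..length T}" "\<rho> p < \<rho> i" "LPF T \<rho> i = rlce T p i"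
    using LPF_cases[OF i1(2)] by blast
  have "rlce T p i \<le> rlce T j i"
  proof (cases "p = j")
    case False
    then have "\<rho> p \<noteq> \<rho> j" using bij p j1 by (metis bij_betw_def inj_on_def)
    then have "\<rho> p < \<rho> j" using p adj by auto
    then have "R (suf T p) (suf T j)" using ordR p j1 by auto
    then show ?thesis using betw Rji by (simp add: rlce_def)
  qed simp
  then show ?thesis using lemA[OF i] g1 r p by simp
qed

lemma count_PDA:
  "card (PDA T \<rho>) \<le> card {i \<in> {1..length T}. i = 1 \<or>
      \<not> (\<exists>j \<in> {2..length T}. \<rho> j + 1 = \<rho> i \<and> chr T (j - 1) = chr T (i - 1))}"
  (is "_ \<le> card ?H")
proof -
  define v where "v i = i + LPF T \<rho> i" for i
  have step: "v (i - 1) = v i" if "i \<in> {1..length T}" "i \<notin> ?H" for i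
  proof -
    have "i \<noteq> 1" "\<exists>j \<in> {2..length T}. \<rho> j + 1 = \<rho> i \<and> chr T (j - 1) = chr T (i - 1)"
      using that by auto
    then obtain j where "j \<in> {2..length T}" "\<rho> j + 1 = \<rho> i" "chr T (j - 1) = chr T (i - 1)"
      "i \<noteq> 1" by blast
    moreover have "2 \<le> i" "i \<le> length T" using \<open>i \<noteq> 1\<close> that(1) by auto
    ultimately have "LPF T \<rho> (i - 1) = LPF T \<rho> i + 1" using lemB[of i j] by auto
    then show ?thesis using \<open>2 \<le> i\<close> unfolding v_def by simp
  qed
  have reach: "i \<in> {1..length T} \<longrightarrow> (\<exists>h \<in> ?H. v h = v i)" for i
  proof (induction i)
    case 0 then show ?case by simp
  next
    case (Suc k)
    show ?case
    proof
      assume s: "Suc k \<in> {1..length T}"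
      show "\<exists>h \<in> ?H. v h = v (Suc k)"
      proof (cases "Suc k \<in> ?H")
        case True then show ?thesis by blast
      next
        case False
        then have "k \<noteq> 0" using s by auto
        then have "k \<in> {1..length T}" using s by auto
        then obtain h where "h \<in> ?H" "v h = v k" using Suc.IH by blast
        then show ?thesis using step[OF s False] by auto
      qed
    qed
  qed
  have fH: "finite ?H" by (rule finite_Collect_conjI, rule disjI1) simp
  have fvH: "finite (v ` ?H)" using fH by (rule finite_imageI)
  have "PDA T \<rho> = v ` {1..length T}" unfolding PDA_def v_def by (rule Setcompr_eq_image)
  also have "\<dots> \<subseteq> v ` ?H"
  proof
    fix x assume "x \<in> v ` {1..length T}"
    then obtain i where i: "i \<in> {1..length T}" "x = v i" by (rule imageE)
    have "\<exists>h \<in> ?H. v h = v i" using reach[of i] i(1) by (rule mp)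
    then obtain h where h: "h \<in> ?H" "v h = v i" by (rule bexE)
    show "x \<in> v ` ?H"
    proof (rule image_eqI[of x v h])
      show "x = v h" using i(2) h(2) by (rule trans_sym)
      show "h \<in> ?H" by (rule h(1))
    qed
  qed
  finally have "card (PDA T \<rho>) \<le> card (v ` ?H)" by (rule card_mono[OF fvH])
  also have "\<dots> \<le> card ?H" using fH by (rule card_image_le)
  finally show ?thesis .
qed

end

end


theorem lemma17:
  fixes T :: "nat list"
  assumes "is_text T"
  defines "n \<equiv> length T"
  defines "\<pi> \<equiv> (\<lambda>i. ISA T i)"
  defines "\<pi>bar \<equiv> (\<lambda>i. n - ISA T i + 1)"
  defines "r \<equiv> runs (BWT T)"
  shows "order_preserving T \<pi> \<and> order_preserving T \<pi>bar
         \<and> card (PDA T \<pi>) \<le> r \<and> card (PDA T \<pi>bar) \<le> r"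
proof -
  note hT = assms(1)
  have b1: "bij_betw (ISA T) {1..length T} {1..length T}" using ISA_bij[OF hT] .
  have o1: "\<And>i j. i \<in> {1..length T} \<Longrightarrow> j \<in> {1..length T} \<Longrightarrow> ISA T j < ISA T i \<longleftrightarrow> suf T j < suf T i"
    using ISA_less_iff[OF hT] by blast
  have c1: "\<And>(x::nat) a b. (x # a < x # b) \<longleftrightarrow> a < b" by simp
  have btw1: "\<And>a b c :: nat list. a < b \<Longrightarrow> b < c \<Longrightarrow> lcp a c \<le> lcp b c"
    using lcp_between by (meson less_imp_le)
  have P1: "order_preserving T (ISA T)"
    using rho_op[where \<rho> = "ISA T" and R = "(<)", OF hT b1 o1 c1 btw1] .
  have P3: "card (PDA T (ISA T)) \<le> runs (BWT T)"
    using count_PDA[where \<rho> = "ISA T" and R = "(<)", OF hT b1 o1 c1 btw1] runs_bound1[OF hT] by (rule le_trans)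
  define \<rho>2 where "\<rho>2 = (\<lambda>i. length T - ISA T i + 1)"
  have rev: "bij_betw (\<lambda>k. length T - k + 1) {1..length T} {1..length T}"
    by (rule bij_betw_byWitness[where f' = "\<lambda>k. length T - k + 1"]) auto
  have b2: "bij_betw \<rho>2 {1..length T} {1..length T}"
    using bij_betw_trans[OF b1 rev] unfolding \<rho>2_def comp_def .
  have o2: "\<And>i j. i \<in> {1..length T} \<Longrightarrow> j \<in> {1..length T} \<Longrightarrow> \<rho>2 j < \<rho>2 i \<longleftrightarrow> suf T i < suf T j"
  proof -
    fix i j assume ij: "i \<in> {1..length T}" "j \<in> {1..length T}"
    have "\<rho>2 j < \<rho>2 i \<longleftrightarrow> ISA T i < ISA T j"
      using ISA_range[OF hT ij(1)] ISA_range[OF hT ij(2)] unfolding \<rho>2_def by auto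
    then show "\<rho>2 j < \<rho>2 i \<longleftrightarrow> suf T i < suf T j" using ISA_less_iff[OF hT ij] by simp
  qed
  have c2: "\<And>(x::nat) a b. (x # b < x # a) \<longleftrightarrow> b < a" by simp
  have btw2: "\<And>a b c :: nat list. b < a \<Longrightarrow> c < b \<Longrightarrow> lcp a c \<le> lcp b c"
  proof -
    fix a b c :: "nat list" assume "b < a" "c < b"
    then have "lcp c a \<le> lcp c b" using lcp_between[of c b a] by simp
    then show "lcp a c \<le> lcp b c" by (simp add: lcp_sym)
  qed
  have P2: "order_preserving T \<rho>2"
    using rho_op[where \<rho> = "\<rho>2" and R = "\<lambda>a b. b < a", OF hT b2 o2 c2 btw2] .
  have P4: "card (PDA T \<rho>2) \<le> runs (BWT T)"
    using count_PDA[where \<rho> = "\<rho>2" and R = "\<lambda>a b. b < a", OF hT b2 o2 c2 btw2] runs_bound2[OF hT]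
    unfolding \<rho>2_def by (rule le_trans)
  have e1: "\<pi> = ISA T" unfolding \<pi>_def by (rule refl)
  have e2: "\<pi>bar = \<rho>2" unfolding \<pi>bar_def \<rho>2_def n_def by (rule refl)
  show ?thesis unfolding e1 e2 r_def using P1 P2 P3 P4 by blast
qed

end
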